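(* Let $G=(V,E)$ be a graph with $n=|V|$. For all $i\in[0,n-1]$, all $v\in V$ and all $w\in D_{i,v}\setminus D_{i+1,v}$, we have $p_v([w]_v)=i$.
   Context: Graphs are finite, simple, undirected, with nonempty vertex set. A module of $G=(V,E)$ is a nonempty $M\subseteq V$ such that every $u\in V\setminus M$ is adjacent either to all or to none of the vertices of $M$. For $|V|>1$ and $v\in V$, $D_G(v)$ is: the connected component of $G$ containing $v$ if $G$ is disconnected; otherwise the connected component of $\overline{G}$ containing $v$ if $\overline{G}$ is disconnected; otherwise (both connected, in which case the maximal proper modules of $G$ partition $V$) the maximal proper module of $G$ containing $v$; if $|V|=1$, $D_G(v)=\{v\}$. Define $D_{0,v}=V$ and $D_{i+1,v}=D_{G[D_{i,v}]}(v)$ for $i\in[0,n-1]$. For $v,w\in V$, $M_{v,w}$ is the intersection of all modules of $G$ containing $v$ and $w$. Define $w_1\prec_v w_2$ iff $M_{v,w_2}\subsetneq M_{v,w_1}$; $\prec_v$ is a strict weak order, so incomparability $\sim_v$ w.r.t. $\prec_v$ is an equivalence relation on $V$ with classes $[w]_v$, and $\prec_v$ induces a strict linear order on $V/{\sim_v}$ (with $[z]_v\prec_v[w]_v$ iff $z\prec_v w$). $p_v\colon V/{\sim_v}\to\mathbb{N}$ assigns to each class its position in this strict linear order, the smallest class receiving $0$. *)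

theory Defs
  imports Main
begin

text \<open>A graph is given by a finite nonempty vertex set V and a symmetric, irreflexive
  adjacency relation E (only its restriction to V matters).  Induced subgraphs G[S]
  are represented by the pair (S, E).\<close>

definition is_module :: "'a set \<Rightarrow> ('a \<Rightarrow> 'a \<Rightarrow> bool) \<Rightarrow> 'a set \<Rightarrow> bool" where
  "is_module V E M \<longleftrightarrow> M \<noteq> {} \<and> M \<subseteq> V \<and>
     (\<forall>u\<in>V - M. (\<forall>m\<in>M. E u m) \<or> (\<forall>m\<in>M. \<not> E u m))"

definition compl_rel :: "('a \<Rightarrow> 'a \<Rightarrow> bool) \<Rightarrow> 'a \<Rightarrow> 'a \<Rightarrow> bool" where
  "compl_rel E x y \<longleftrightarrow> x \<noteq> y \<and> \<not> E x y"

definition reach :: "'a set \<Rightarrow> ('a \<Rightarrow> 'a \<Rightarrow> bool) \<Rightarrow> 'a \<Rightarrow> 'a \<Rightarrow> bool" where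
  "reach V E = (\<lambda>x y. x \<in> V \<and> y \<in> V \<and> E x y)\<^sup>*\<^sup>*"

definition component :: "'a set \<Rightarrow> ('a \<Rightarrow> 'a \<Rightarrow> bool) \<Rightarrow> 'a \<Rightarrow> 'a set" where
  "component V E v = {w \<in> V. reach V E v w}"

definition connected_graph :: "'a set \<Rightarrow> ('a \<Rightarrow> 'a \<Rightarrow> bool) \<Rightarrow> bool" where
  "connected_graph V E \<longleftrightarrow> (\<forall>x\<in>V. \<forall>y\<in>V. reach V E x y)"

definition max_proper_module :: "'a set \<Rightarrow> ('a \<Rightarrow> 'a \<Rightarrow> bool) \<Rightarrow> 'a set \<Rightarrow> bool" where
  "max_proper_module V E M \<longleftrightarrow> is_module V E M \<and> M \<noteq> V \<and>
     (\<forall>M'. is_module V E M' \<and> M' \<noteq> V \<and> M \<subseteq> M' \<longrightarrow> M' = M)"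

definition Dfun :: "'a set \<Rightarrow> ('a \<Rightarrow> 'a \<Rightarrow> bool) \<Rightarrow> 'a \<Rightarrow> 'a set" where
  "Dfun V E v =
    (if card V = 1 then {v}
     else if \<not> connected_graph V E then component V E v
     else if \<not> connected_graph V (compl_rel E) then component V (compl_rel E) v
     else (THE M. max_proper_module V E M \<and> v \<in> M))"

fun Dseq :: "'a set \<Rightarrow> ('a \<Rightarrow> 'a \<Rightarrow> bool) \<Rightarrow> 'a \<Rightarrow> nat \<Rightarrow> 'a set" where
  "Dseq V E v 0 = V"
| "Dseq V E v (Suc i) = Dfun (Dseq V E v i) E v"

definition Mvw :: "'a set \<Rightarrow> ('a \<Rightarrow> 'a \<Rightarrow> bool) \<Rightarrow> 'a \<Rightarrow> 'a \<Rightarrow> 'a set" where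
  "Mvw V E v w = \<Inter> {M. is_module V E M \<and> v \<in> M \<and> w \<in> M}"

definition precv :: "'a set \<Rightarrow> ('a \<Rightarrow> 'a \<Rightarrow> bool) \<Rightarrow> 'a \<Rightarrow> 'a \<Rightarrow> 'a \<Rightarrow> bool" where
  "precv V E v w1 w2 \<longleftrightarrow> Mvw V E v w2 \<subset> Mvw V E v w1"

definition simv :: "'a set \<Rightarrow> ('a \<Rightarrow> 'a \<Rightarrow> bool) \<Rightarrow> 'a \<Rightarrow> 'a \<Rightarrow> 'a \<Rightarrow> bool" where
  "simv V E v w1 w2 \<longleftrightarrow> \<not> precv V E v w1 w2 \<and> \<not> precv V E v w2 w1"

definition classv :: "'a set \<Rightarrow> ('a \<Rightarrow> 'a \<Rightarrow> bool) \<Rightarrow> 'a \<Rightarrow> 'a \<Rightarrow> 'a set" where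
  "classv V E v w = {u \<in> V. simv V E v u w}"

definition classesv :: "'a set \<Rightarrow> ('a \<Rightarrow> 'a \<Rightarrow> bool) \<Rightarrow> 'a \<Rightarrow> 'a set set" where
  "classesv V E v = classv V E v ` V"

definition class_precv :: "'a set \<Rightarrow> ('a \<Rightarrow> 'a \<Rightarrow> bool) \<Rightarrow> 'a \<Rightarrow> 'a set \<Rightarrow> 'a set \<Rightarrow> bool" where
  "class_precv V E v C1 C2 \<longleftrightarrow> (\<exists>z\<in>C1. \<exists>w\<in>C2. precv V E v z w)"

definition pv :: "'a set \<Rightarrow> ('a \<Rightarrow> 'a \<Rightarrow> bool) \<Rightarrow> 'a \<Rightarrow> 'a set \<Rightarrow> nat" where
  "pv V E v C = card {C' \<in> classesv V E v. class_precv V E v C' C}"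

end

theory Submission
  imports Defs
begin

lemma reach_refl: "reach S R x x" unfolding reach_def by simp

lemma reach_step: "reach S R x y \<Longrightarrow> y \<in> S \<Longrightarrow> z \<in> S \<Longrightarrow> R y z \<Longrightarrow> reach S R x z"
  unfolding reach_def by (simp add: rtranclp.rtrancl_into_rtrancl)

lemma reach_sym:
  assumes sym: "\<forall>x\<in>S. \<forall>y\<in>S. R x y \<longleftrightarrow> R y x" and r: "reach S R x y"
  shows "reach S R y x"
  using r unfolding reach_def
proof (induction rule: rtranclp_induct)
  case base then show ?case by simp
next
  case (step y z)
  then have "(\<lambda>x y. x \<in> S \<and> y \<in> S \<and> R x y) z y" using sym by auto
  then show ?case using step(3) by (rule converse_rtranclp_into_rtranclp)
qed

lemma reach_trans: "reach S R x y \<Longrightarrow> reach S R y z \<Longrightarrow> reach S R x z"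
  unfolding reach_def by simp

lemma reach_closed:
  assumes "reach S R x y" "x \<in> A" and cl: "\<forall>a\<in>A. \<forall>b\<in>S. R a b \<longrightarrow> b \<in> A"
  shows "y \<in> A"
  using assms(1,2) unfolding reach_def
  by (induction rule: rtranclp_induct) (use cl in auto)

lemma module_compl: "is_module S (compl_rel E) X \<longleftrightarrow> is_module S E X"
proof -
  have *: "((\<forall>m\<in>X. compl_rel E u m) \<or> (\<forall>m\<in>X. \<not> compl_rel E u m)) \<longleftrightarrow> ((\<forall>m\<in>X. E u m) \<or> (\<forall>m\<in>X. \<not> E u m))"
    if "u \<notin> X" for u
    using that unfolding compl_rel_def by fastforce
  show ?thesis unfolding is_module_def by (simp add: *)
qed
lemma closed_module:
  assumes sym: "\<forall>x\<in>S. \<forall>y\<in>S. R x y \<longleftrightarrow> R y x" and "X \<subseteq> S" "X \<noteq> {}"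
    and cl: "\<forall>a\<in>X. \<forall>b\<in>S. R a b \<longrightarrow> b \<in> X"
  shows "is_module S R X"
  unfolding is_module_def
proof (intro conjI ballI)
  fix u assume u: "u \<in> S - X"
  have "\<not> R u m" if "m \<in> X" for m
    using sym cl u that \<open>X \<subseteq> S\<close> by blast
  then show "(\<forall>m\<in>X. R u m) \<or> (\<forall>m\<in>X. \<not> R u m)" by blast
qed (use assms in auto)
lemma module_union:
  assumes m1: "is_module S E M1" and m2: "is_module S E M2" and c: "c \<in> M1" "c \<in> M2"
  shows "is_module S E (M1 \<union> M2)"
  unfolding is_module_def
proof (intro conjI ballI)
  fix u assume u: "u \<in> S - (M1 \<union> M2)"
  have h1: "(\<forall>m\<in>M1. E u m) \<or> (\<forall>m\<in>M1. \<not> E u m)" using m1 u unfolding is_module_def by blast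
  have h2: "(\<forall>m\<in>M2. E u m) \<or> (\<forall>m\<in>M2. \<not> E u m)" using m2 u unfolding is_module_def by blast
  show "(\<forall>m\<in>M1 \<union> M2. E u m) \<or> (\<forall>m\<in>M1 \<union> M2. \<not> E u m)"
  proof (cases "E u c")
    case True then show ?thesis using h1 h2 c by blast
  next
    case False then show ?thesis using h1 h2 c by blast
  qed
qed (use m1 m2 in \<open>auto simp: is_module_def\<close>)
lemma comp_closed: "\<forall>a\<in>component S R v. \<forall>b\<in>S. R a b \<longrightarrow> b \<in> component S R v"
  unfolding component_def using reach_step by fastforce

lemma comp_sub_module:
  assumes sym: "\<forall>x\<in>S. \<forall>y\<in>S. R x y \<longleftrightarrow> R y x" and md: "is_module S R X"
    and vX: "v \<in> X" and wX: "w \<in> X" and wc: "w \<notin> component S R v"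
  shows "component S R v \<subseteq> X"
proof
  fix y assume "y \<in> component S R v"
  then have "reach S R v y" by (simp add: component_def)
  then show "y \<in> X" unfolding reach_def
  proof (induction rule: rtranclp_induct)
    case base show ?case using vX .
  next
    case (step y z)
    show ?case
    proof (rule ccontr)
      assume zX: "z \<notin> X"
      from step(2) have yz: "y \<in> S" "z \<in> S" "R y z" by auto
      have "R z y" using sym yz by auto
      with md zX yz step(3) have Rzw: "R z w" unfolding is_module_def using wX by blast
      have rvz: "reach S R v z" using step(1) step(2) unfolding reach_def
        by (simp add: rtranclp.rtrancl_into_rtrancl)
      have wS: "w \<in> S" using md wX unfolding is_module_def by auto
      have "reach S R v w" using reach_step[OF rvz yz(2) wS Rzw] .
      then show False using wc wS unfolding component_def by auto
    qed
  qed
qed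

lemma module_trans: "is_module V E S \<Longrightarrow> is_module S E X \<Longrightarrow> is_module V E X"
  unfolding is_module_def by blast

lemma module_restrict: "is_module V E X \<Longrightarrow> S \<subseteq> V \<Longrightarrow> X \<inter> S \<noteq> {} \<Longrightarrow> is_module S E (X \<inter> S)"
  unfolding is_module_def by blast

lemma overlap_disconn:
  assumes sym: "\<forall>x\<in>S. \<forall>y\<in>S. R x y \<longleftrightarrow> R y x"
    and m1: "is_module S R M1" and m2: "is_module S R M2"
    and U: "M1 \<union> M2 = S" and c: "c \<in> M1" "c \<in> M2"
    and a0: "a0 \<in> M1" "a0 \<notin> M2" and b0: "b0 \<in> M2" "b0 \<notin> M1"
    and nr: "\<not> R a0 b0"
  shows "\<not> connected_graph S R"
proof
  assume conn: "connected_graph S R"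
  let ?A = "M1 - M2"
  have S: "M1 \<subseteq> S" "M2 \<subseteq> S" using m1 m2 unfolding is_module_def by auto
  have nba: "\<not> R b0 a0" using sym nr a0 b0 S by auto
  have none: "\<forall>a\<in>?A. \<forall>m\<in>M2. \<not> R a m"
  proof (intro ballI)
    fix a m assume a: "a \<in> ?A" and m: "m \<in> M2"
    have "b0 \<in> S - M1" using b0 S by auto
    with m1 have "(\<forall>x\<in>M1. R b0 x) \<or> (\<forall>x\<in>M1. \<not> R b0 x)" unfolding is_module_def by blast
    with nba a0 have "\<not> R b0 a" using a by auto
    then have nab: "\<not> R a b0" using sym a b0 S by auto
    have "a \<in> S - M2" using a S by auto
    with m2 have "(\<forall>x\<in>M2. R a x) \<or> (\<forall>x\<in>M2. \<not> R a x)" unfolding is_module_def by blast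
    with nab b0 show "\<not> R a m" using m by auto
  qed
  have cl: "\<forall>a\<in>?A. \<forall>b\<in>S. R a b \<longrightarrow> b \<in> ?A" using none U by blast
  have "reach S R a0 c" using conn a0 S c unfolding connected_graph_def by auto
  then have "c \<in> ?A" using reach_closed[OF _ _ cl] a0 by auto
  then show False using c by auto
qed

lemma compl_sym: "\<forall>x\<in>S. \<forall>y\<in>S. E x y \<longleftrightarrow> E y x \<Longrightarrow>
    \<forall>x\<in>S. \<forall>y\<in>S. compl_rel E x y \<longleftrightarrow> compl_rel E y x"
  unfolding compl_rel_def by auto

lemma prime_overlap:
  assumes sym: "\<forall>x\<in>S. \<forall>y\<in>S. E x y \<longleftrightarrow> E y x"
    and conn: "connected_graph S E" and cconn: "connected_graph S (compl_rel E)"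
    and m1: "is_module S E M1" and m2: "is_module S E M2"
    and U: "M1 \<union> M2 = S" and c: "c \<in> M1" "c \<in> M2"
    and a0: "a0 \<in> M1" "a0 \<notin> M2" and b0: "b0 \<in> M2" "b0 \<notin> M1"
  shows False
proof (cases "E a0 b0")
  case True
  have "\<not> compl_rel E a0 b0" using True by (simp add: compl_rel_def)
  from overlap_disconn[OF compl_sym[OF sym] _ _ U c a0 b0 this] m1 m2 cconn
  show False by (simp add: module_compl)
next
  case False
  from overlap_disconn[OF sym m1 m2 U c a0 b0 False] conn show False by simp
qed

lemma prime_key:
  assumes sym: "\<forall>x\<in>S. \<forall>y\<in>S. E x y \<longleftrightarrow> E y x"
    and conn: "connected_graph S E" and cconn: "connected_graph S (compl_rel E)"
    and M: "max_proper_module S E M" "v \<in> M"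
    and X: "is_module S E X" "v \<in> X" "\<not> X \<subseteq> M"
  shows "X = S"
proof (rule ccontr)
  assume XS: "X \<noteq> S"
  have nMX: "\<not> M \<subseteq> X" using M(1) X XS unfolding max_proper_module_def by blast
  have MM: "is_module S E M" using M(1) unfolding max_proper_module_def by blast
  have U: "is_module S E (M \<union> X)" by (rule module_union[OF MM X(1) M(2) X(2)])
  show False
  proof (cases "M \<union> X = S")
    case True
    obtain a0 where "a0 \<in> M" "a0 \<notin> X" using nMX by auto
    moreover obtain b0 where "b0 \<in> X" "b0 \<notin> M" using X(3) by auto
    ultimately show False using prime_overlap[OF sym conn cconn MM X(1) True M(2) X(2)] by blast
  next
    case False
    then have "M \<union> X = M" using M(1) U unfolding max_proper_module_def by blast
    then show False using X(3) by auto
  qed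
qed

lemma prime_the:
  assumes fin: "finite S" and v: "v \<in> S" and c1: "card S \<noteq> 1"
    and sym: "\<forall>x\<in>S. \<forall>y\<in>S. E x y \<longleftrightarrow> E y x"
    and conn: "connected_graph S E" and cconn: "connected_graph S (compl_rel E)"
  shows "max_proper_module S E (THE M. max_proper_module S E M \<and> v \<in> M)
     \<and> v \<in> (THE M. max_proper_module S E M \<and> v \<in> M)"
proof -
  let ?F = "{M. is_module S E M \<and> M \<noteq> S \<and> v \<in> M}"
  have "?F \<subseteq> Pow S" unfolding is_module_def by auto
  then have fin: "finite ?F" using fin by (meson finite_Pow_iff finite_subset)
  have "is_module S E {v}" unfolding is_module_def using v by auto
  moreover have "{v} \<noteq> S" using c1 by auto
  ultimately have "{v} \<in> ?F" by auto
  then obtain m where m: "m \<in> ?F" "\<forall>b\<in>?F. m \<le> b \<longrightarrow> m = b"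
    using finite_has_maximal[OF fin] by blast
  have mm: "max_proper_module S E m \<and> v \<in> m" unfolding max_proper_module_def using m by blast
  have uniq: "M = m" if M: "max_proper_module S E M \<and> v \<in> M" for M
  proof (cases "M \<subseteq> m")
    case True then show ?thesis using M mm unfolding max_proper_module_def by blast
  next
    case False
    have "M = S" using prime_key[OF sym conn cconn] mm M False unfolding max_proper_module_def
      by blast
    then show ?thesis using M unfolding max_proper_module_def by blast
  qed
  show ?thesis using theI[of "\<lambda>M. max_proper_module S E M \<and> v \<in> M", OF mm uniq] by blast
qed

definition good :: "'a set \<Rightarrow> ('a \<Rightarrow> 'a \<Rightarrow> bool) \<Rightarrow> 'a \<Rightarrow> 'a set \<Rightarrow> bool" where
  "good S E v T \<longleftrightarrow> v \<in> T \<and> T \<subseteq> S \<and> is_module S E T \<and> (card S \<noteq> 1 \<longrightarrow> T \<noteq> S)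
     \<and> (\<forall>w\<in>S-T. \<forall>X. is_module S E X \<and> v \<in> X \<and> w \<in> X \<longrightarrow> T \<subseteq> X)
     \<and> (\<forall>w\<in>S-T. \<forall>w'\<in>S-T.
          ((\<forall>X. is_module S E X \<and> v\<in>X \<and> w\<in>X \<longrightarrow> w'\<in>X) \<and> (\<forall>X. is_module S E X \<and> v\<in>X \<and> w'\<in>X \<longrightarrow> w\<in>X))
        \<or> ((\<exists>Y. is_module S E Y \<and> v\<in>Y \<and> w\<in>Y \<and> w'\<notin>Y) \<and> (\<exists>Y. is_module S E Y \<and> v\<in>Y \<and> w'\<in>Y \<and> w\<notin>Y)))"

lemma comp_case:
  assumes symR: "\<forall>x\<in>S. \<forall>y\<in>S. R x y \<longleftrightarrow> R y x" and v: "v \<in> S"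
    and nc: "\<not> connected_graph S R" and meq: "\<And>X. is_module S E X \<longleftrightarrow> is_module S R X"
  shows "good S E v (component S R v)"
proof -
  let ?T = "component S R v"
  have vT: "v \<in> ?T" using v reach_refl unfolding component_def by fastforce
  have TS: "?T \<subseteq> S" unfolding component_def by auto
  have "is_module S R ?T" using closed_module[OF symR TS _ comp_closed] vT by blast
  then have Tm: "is_module S E ?T" using meq by simp
  have TneS: "?T \<noteq> S"
  proof
    assume "?T = S"
    then have all: "\<forall>x\<in>S. reach S R v x" unfolding component_def by auto
    have "connected_graph S R" unfolding connected_graph_def
    proof (intro ballI)
      fix x y assume "x \<in> S" "y \<in> S"
      then have "reach S R x v" "reach S R v y" using all reach_sym[OF symR] by auto
      then show "reach S R x y" by (rule reach_trans)
    qed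
    then show False using nc by simp
  qed
  have csub: "component S R a \<subseteq> X" if "is_module S E X" "a \<in> X" "b \<in> X" "b \<notin> component S R a" for X a b
  proof -
    have "is_module S R X" using that(1) meq by simp
    from comp_sub_module[OF symR this that(2,3,4)] show ?thesis .
  qed
  have c: "\<forall>w\<in>S-?T. \<forall>X. is_module S E X \<and> v \<in> X \<and> w \<in> X \<longrightarrow> ?T \<subseteq> X"
  proof (intro ballI allI impI)
    fix w X assume "w \<in> S - ?T" "is_module S E X \<and> v \<in> X \<and> w \<in> X"
    then show "?T \<subseteq> X" using csub[of X v w] by blast
  qed
  have d: "((\<forall>X. is_module S E X \<and> v\<in>X \<and> w\<in>X \<longrightarrow> w'\<in>X) \<and> (\<forall>X. is_module S E X \<and> v\<in>X \<and> w'\<in>X \<longrightarrow> w\<in>X))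
        \<or> ((\<exists>Y. is_module S E Y \<and> v\<in>Y \<and> w\<in>Y \<and> w'\<notin>Y) \<and> (\<exists>Y. is_module S E Y \<and> v\<in>Y \<and> w'\<in>Y \<and> w\<notin>Y))"
    if w: "w \<in> S - ?T" and w': "w' \<in> S - ?T" for w w'
  proof (cases "reach S R w w'")
    case True
    have nvw: "v \<notin> component S R w"
      using w reach_sym[OF symR] unfolding component_def by blast
    have nvw': "v \<notin> component S R w'"
      using w' reach_sym[OF symR] unfolding component_def by blast
    have i1: "w' \<in> component S R w" using True w' unfolding component_def by auto
    have i2: "w \<in> component S R w'" using True w reach_sym[OF symR] unfolding component_def by auto
    have "(\<forall>X. is_module S E X \<and> v\<in>X \<and> w\<in>X \<longrightarrow> w'\<in>X)"
    proof (intro allI impI)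
      fix X assume X: "is_module S E X \<and> v\<in>X \<and> w\<in>X"
      then have "component S R w \<subseteq> X" using csub[of X w v] nvw by blast
      then show "w' \<in> X" using i1 by blast
    qed
    moreover have "(\<forall>X. is_module S E X \<and> v\<in>X \<and> w'\<in>X \<longrightarrow> w\<in>X)"
    proof (intro allI impI)
      fix X assume X: "is_module S E X \<and> v\<in>X \<and> w'\<in>X"
      then have "component S R w' \<subseteq> X" using csub[of X w' v] nvw' by blast
      then show "w \<in> X" using i2 by blast
    qed
    ultimately show ?thesis by (rule disjI1[OF conjI])
  next
    case False
    have False': "\<not> reach S R w' w" using False reach_sym[OF symR] by blast
    have wc: "w \<in> component S R w" "w' \<in> component S R w'" using w w' reach_refl unfolding component_def by auto
    have Y: "is_module S E (?T \<union> component S R u)" for u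
    proof -
      have cl: "\<forall>a\<in>?T \<union> component S R u. \<forall>b\<in>S. R a b \<longrightarrow> b \<in> ?T \<union> component S R u"
        using comp_closed[of S R v] comp_closed[of S R u] by blast
      have sub: "?T \<union> component S R u \<subseteq> S" unfolding component_def by auto
      have "?T \<union> component S R u \<noteq> {}" using vT by blast
      from closed_module[OF symR sub this cl] show ?thesis using meq by simp
    qed
    have n1: "w' \<notin> ?T \<union> component S R w" using w' False unfolding component_def by auto
    have n2: "w \<notin> ?T \<union> component S R w'" using w False' unfolding component_def by auto
    have "\<exists>Y. is_module S E Y \<and> v\<in>Y \<and> w\<in>Y \<and> w'\<notin>Y"
      by (rule exI[of _ "?T \<union> component S R w"]) (use Y[of w] vT wc n1 in simp)
    moreover have "\<exists>Y. is_module S E Y \<and> v\<in>Y \<and> w'\<in>Y \<and> w\<notin>Y"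
      by (rule exI[of _ "?T \<union> component S R w'"]) (use Y[of w'] vT wc n2 in simp)
    ultimately show ?thesis by (rule disjI2[OF conjI])
  qed
  show ?thesis unfolding good_def
    apply (intro conjI)
         apply (rule vT)
        apply (rule TS)
       apply (rule Tm)
      apply (simp add: TneS)
     apply (rule c)
    apply (intro ballI)
    apply (rule d)
     apply assumption+
    done
qed

lemma step_good:
  assumes fin: "finite S" and v: "v \<in> S" and sym: "\<forall>x\<in>S. \<forall>y\<in>S. E x y \<longleftrightarrow> E y x"
  shows "good S E v (Dfun S E v)"
proof (cases "card S = 1")
  case True
  then have S: "S = {v}" using v by (metis card_1_singletonE singletonD)
  have "is_module S E S" unfolding is_module_def using v by auto
  then show ?thesis using True S unfolding good_def Dfun_def by auto
next
  case c1: False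
  show ?thesis
  proof (cases "connected_graph S E")
    case False
    then show ?thesis using c1 comp_case[OF sym v False] unfolding Dfun_def by simp
  next
    case conn: True
    show ?thesis
    proof (cases "connected_graph S (compl_rel E)")
      case False
      then show ?thesis using c1 conn comp_case[OF compl_sym[OF sym] v False module_compl[symmetric]]
        unfolding Dfun_def by simp
    next
      case cconn: True
      define T where "T = (THE M. max_proper_module S E M \<and> v \<in> M)"
      have T: "max_proper_module S E T" "v \<in> T" using prime_the[OF fin v c1 sym conn cconn]
        unfolding T_def by auto
      have DT: "Dfun S E v = T" using c1 conn cconn unfolding Dfun_def T_def by simp
      have XS: "X = S" if "is_module S E X" "v \<in> X" "w \<in> X" "w \<notin> T" for X w
        using prime_key[OF sym conn cconn T] that by blast
      have TS: "T \<subseteq> S" "is_module S E T" "T \<noteq> S"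
        using T(1) unfolding max_proper_module_def is_module_def by auto
      have c: "\<forall>w\<in>S-T. \<forall>X. is_module S E X \<and> v \<in> X \<and> w \<in> X \<longrightarrow> T \<subseteq> X"
      proof (intro ballI allI impI)
        fix w X assume "w \<in> S - T" "is_module S E X \<and> v \<in> X \<and> w \<in> X"
        then have "X = S" using XS[of X w] by blast
        then show "T \<subseteq> X" using TS by simp
      qed
      have d: "\<forall>w\<in>S-T. \<forall>w'\<in>S-T.
          ((\<forall>X. is_module S E X \<and> v\<in>X \<and> w\<in>X \<longrightarrow> w'\<in>X) \<and> (\<forall>X. is_module S E X \<and> v\<in>X \<and> w'\<in>X \<longrightarrow> w\<in>X))
        \<or> ((\<exists>Y. is_module S E Y \<and> v\<in>Y \<and> w\<in>Y \<and> w'\<notin>Y) \<and> (\<exists>Y. is_module S E Y \<and> v\<in>Y \<and> w'\<in>Y \<and> w\<notin>Y))"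
      proof (intro ballI disjI1 conjI allI impI)
        fix w w' X assume w: "w \<in> S - T" and w': "w' \<in> S - T"
        { assume "is_module S E X \<and> v\<in>X \<and> w\<in>X"
          then have "X = S" using XS[of X w] w by blast
          then show "w' \<in> X" using w' by simp }
        { assume "is_module S E X \<and> v\<in>X \<and> w'\<in>X"
          then have "X = S" using XS[of X w'] w' by blast
          then show "w \<in> X" using w by simp }
      qed
      have "good S E v T" unfolding good_def using T(2) TS c d by simp
      then show ?thesis using DT by simp
    qed
  qed
qed

lemma good_basic: "good S E v T \<Longrightarrow> v \<in> T \<and> T \<subseteq> S \<and> is_module S E T"
  by (simp add: good_def)

lemma good_ne: "good S E v T \<Longrightarrow> card S \<noteq> 1 \<Longrightarrow> T \<noteq> S"
  by (simp add: good_def)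

lemma good_c: "good S E v T \<Longrightarrow> w \<in> S - T \<Longrightarrow> is_module S E X \<Longrightarrow> v \<in> X \<Longrightarrow> w \<in> X \<Longrightarrow> T \<subseteq> X"
  unfolding good_def by blast

lemma good_d: "good S E v T \<Longrightarrow> w \<in> S - T \<Longrightarrow> w' \<in> S - T \<Longrightarrow>
   ((\<forall>X. is_module S E X \<and> v\<in>X \<and> w\<in>X \<longrightarrow> w'\<in>X) \<and> (\<forall>X. is_module S E X \<and> v\<in>X \<and> w'\<in>X \<longrightarrow> w\<in>X))
        \<or> ((\<exists>Y. is_module S E Y \<and> v\<in>Y \<and> w\<in>Y \<and> w'\<notin>Y) \<and> (\<exists>Y. is_module S E Y \<and> v\<in>Y \<and> w'\<in>Y \<and> w\<notin>Y))"
  unfolding good_def by (elim conjE) (drule bspec, assumption, drule bspec, assumption, assumption)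

lemma Mvw_sub: "is_module V E Y \<Longrightarrow> v \<in> Y \<Longrightarrow> w \<in> Y \<Longrightarrow> Mvw V E v w \<subseteq> Y"
  unfolding Mvw_def by (rule Inter_lower) simp

lemma Mvw_mem: "w \<in> Mvw V E v w"
  unfolding Mvw_def by auto

lemma Mvw_mono: "z \<in> Mvw V E v w \<Longrightarrow> Mvw V E v z \<subseteq> Mvw V E v w"
  unfolding Mvw_def
proof (rule Inter_greatest)
  fix X assume z: "z \<in> \<Inter> {M. is_module V E M \<and> v \<in> M \<and> w \<in> M}"
    and X: "X \<in> {M. is_module V E M \<and> v \<in> M \<and> w \<in> M}"
  then have "z \<in> X" by blast
  with X have "X \<in> {M. is_module V E M \<and> v \<in> M \<and> z \<in> M}" by simp
  then show "\<Inter> {M. is_module V E M \<and> v \<in> M \<and> z \<in> M} \<subseteq> X" by (rule Inter_lower)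
qed

lemma Mvw_in:
  assumes mS: "is_module V E S" and vS: "v \<in> S" and wS: "w \<in> S"
    and all: "\<forall>X. is_module S E X \<and> v\<in>X \<and> w\<in>X \<longrightarrow> z\<in>X"
  shows "z \<in> Mvw V E v w"
  unfolding Mvw_def
proof (rule InterI)
  fix X assume "X \<in> {M. is_module V E M \<and> v \<in> M \<and> w \<in> M}"
  then have X: "is_module V E X" "v \<in> X" "w \<in> X" by auto
  have SV: "S \<subseteq> V" using mS unfolding is_module_def by auto
  have ne: "X \<inter> S \<noteq> {}" using X(2) vS by auto
  have m: "is_module S E (X \<inter> S)" by (rule module_restrict[OF X(1) SV ne])
  have "is_module S E (X \<inter> S) \<and> v\<in>X \<inter> S \<and> w\<in>X \<inter> S \<longrightarrow> z\<in>X \<inter> S"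
    using all by (rule allE)
  moreover have "v\<in>X \<inter> S" "w\<in>X \<inter> S" using X vS wS by auto
  ultimately have "z \<in> X \<inter> S" using m by simp
  then show "z \<in> X" by simp
qed

lemma Mvw_out:
  assumes "is_module V E S" "is_module S E Y" "v \<in> Y" "w \<in> Y" "z \<notin> Y"
  shows "z \<notin> Mvw V E v w"
proof -
  have "is_module V E Y" by (rule module_trans[OF assms(1,2)])
  then have "Mvw V E v w \<subseteq> Y" by (rule Mvw_sub[OF _ assms(3,4)])
  then show ?thesis using assms(5) by auto
qed

lemma Mvw_vv: "v \<in> V \<Longrightarrow> Mvw V E v v = {v}"
proof -
  assume v: "v \<in> V"
  have "is_module V E {v}" unfolding is_module_def using v by auto
  then have "Mvw V E v v \<subseteq> {v}" by (rule Mvw_sub) auto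
  then show ?thesis using Mvw_mem[of v V E v] by auto
qed

lemma Dseq_good:
  assumes fin: "finite V" and v: "v \<in> V" and sym: "\<forall>x\<in>V. \<forall>y\<in>V. E x y \<longleftrightarrow> E y x"
  shows "v \<in> Dseq V E v i \<and> Dseq V E v i \<subseteq> V \<and> is_module V E (Dseq V E v i)
     \<and> good (Dseq V E v i) E v (Dseq V E v (Suc i))"
proof (induction i)
  case 0
  have m: "is_module V E V" unfolding is_module_def using v by auto
  have g: "good V E v (Dfun V E v)" by (rule step_good[OF fin v sym])
  have e0: "Dseq V E v 0 = V" by simp
  have e1: "Dseq V E v (Suc 0) = Dfun V E v" by simp
  show ?case unfolding e0 e1 using v m g by blast
next
  case (Suc i)
  let ?S = "Dseq V E v i" and ?T = "Dseq V E v (Suc i)"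
  have IH: "?S \<subseteq> V" "is_module V E ?S" "good ?S E v ?T" using Suc by blast+
  have g: "v \<in> ?T" "?T \<subseteq> ?S" "is_module ?S E ?T" using good_basic[OF IH(3)] by blast+
  have TV: "?T \<subseteq> V" using g(2) IH(1) by (rule subset_trans)
  have mT: "is_module V E ?T" by (rule module_trans[OF IH(2) g(3)])
  have finT: "finite ?T" using fin TV finite_subset by blast
  have symT: "\<forall>x\<in>?T. \<forall>y\<in>?T. E x y \<longleftrightarrow> E y x" using sym TV by blast
  have gg: "good ?T E v (Dfun ?T E v)" by (rule step_good[OF finT g(1) symT])
  have e: "Dseq V E v (Suc (Suc i)) = Dfun ?T E v" by (simp only: Dseq.simps)
  show ?case unfolding e using g(1) TV mT gg by blast
qed

lemma ex_step: "P (0::nat) \<Longrightarrow> \<not> P n \<Longrightarrow> \<exists>k<n. P k \<and> \<not> P (Suc k)"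
proof (induction n)
  case 0 then show ?case by simp
next
  case (Suc n)
  show ?case
  proof (cases "P n")
    case True then show ?thesis using Suc.prems by blast
  next
    case False
    then obtain k where "k < n" "P k" "\<not> P (Suc k)" using Suc.IH Suc.prems by blast
    then show ?thesis using less_SucI by blast
  qed
qed

theorem lemma3p14:
  fixes V :: "'a set" and E :: "'a \<Rightarrow> 'a \<Rightarrow> bool"
  assumes "finite V" and "V \<noteq> {}"
    and "\<forall>x\<in>V. \<forall>y\<in>V. E x y \<longleftrightarrow> E y x"
    and "\<forall>x\<in>V. \<not> E x x"
  shows "\<forall>i<card V. \<forall>v\<in>V. \<forall>w\<in>Dseq V E v i - Dseq V E v (Suc i).
           pv V E v (classv V E v w) = i"
proof (intro allI impI ballI)
  fix i v w assume i: "i < card V" and v: "v \<in> V" and w0: "w \<in> Dseq V E v i - Dseq V E v (Suc i)"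
  define D where "D = Dseq V E v"
  define L where "L = (\<lambda>i. D i - D (Suc i))"
  define M where "M = Mvw V E v"
  have w: "w \<in> L i" using w0 by (simp add: L_def D_def)
  have G: "v \<in> D k \<and> D k \<subseteq> V \<and> is_module V E (D k) \<and> good (D k) E v (D (Suc k))" for k
    unfolding D_def by (rule Dseq_good[OF assms(1) v assms(3)])
  have D0: "D 0 = V" by (simp add: D_def)
  have Gg: "good (D k) E v (D (Suc k))" for k using G[of k] by simp
  have Gv: "v \<in> D k" for k using G[of k] by simp
  have GV: "D k \<subseteq> V" for k using G[of k] by simp
  have Gm: "is_module V E (D k)" for k using G[of k] by simp
  have Gf: "finite (D k)" for k using GV[of k] assms(1) by (rule finite_subset)
  have sub: "D (Suc k) \<subseteq> D k" for k using good_basic[OF Gg[of k]] by simp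
  have mono: "D b \<subseteq> D a" if "a \<le> b" for a b
    using lift_Suc_antimono_le[of D, OF sub that] .
  have card1: "D k = {v}" if c1: "card (D k) = 1" for k
  proof -
    obtain x where x: "D k = {x}" using c1 by (rule card_1_singletonE)
    have "v \<in> D k" using G[of k] by (rule conjunct1)
    then show ?thesis using x by simp
  qed
  have cardD: "card (D k) + k \<le> card V \<or> D k = {v}" for k
  proof (induction k)
    case 0 show ?case by (simp add: D0)
  next
    case (Suc k)
    show ?case
    proof (cases "D k = {v}")
      case True
      have a: "D (Suc k) \<subseteq> {v}" using sub[of k] True by simp
      have b: "v \<in> D (Suc k)" using G[of "Suc k"] by (rule conjunct1)
      from a b have "D (Suc k) = {v}" by blast
      then show ?thesis by simp
    next
      case False
      then have le: "card (D k) + k \<le> card V" using Suc.IH by simp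
      have fk: "finite (D k)" by (rule Gf)
      have "card (D k) \<noteq> 1" using False card1 by blast
      then have "D (Suc k) \<noteq> D k" using good_ne[OF Gg[of k]] by simp
      then have "D (Suc k) \<subset> D k" using sub[of k] by blast
      then have "card (D (Suc k)) < card (D k)" using psubset_card_mono fk by blast
      then show ?thesis using le by simp
    qed
  qed
  have Dend: "D (card V) = {v}"
  proof (rule ccontr)
    assume "D (card V) \<noteq> {v}"
    then have "card (D (card V)) = 0" using cardD[of "card V"] by simp
    moreover have "finite (D (card V))" by (rule Gf)
    moreover have "D (card V) \<noteq> {}" using Gv[of "card V"] by blast
    ultimately show False by simp
  qed
  have level: "\<exists>j. u \<in> L j" if "u \<in> V" "u \<noteq> v" for u
  proof -
    have "u \<in> D 0" "u \<notin> D (card V)" using that D0 Dend by auto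
    then obtain k where "u \<in> D k" "u \<notin> D (Suc k)" using ex_step[of "\<lambda>k. u \<in> D k" "card V"] by blast
    then show ?thesis unfolding L_def by blast
  qed
  have uniq: "a = b" if "u \<in> L a" "u \<in> L b" for u a b
  proof (rule ccontr)
    assume "a \<noteq> b"
    then consider "a < b" | "b < a" by linarith
    then show False
    proof cases
      case 1 then have "D b \<subseteq> D (Suc a)" using mono by simp
      then show False using that unfolding L_def by blast
    next
      case 2 then have "D a \<subseteq> D (Suc b)" using mono by simp
      then show False using that unfolding L_def by blast
    qed
  qed
  have LV: "L j \<subseteq> V" for j using GV[of j] unfolding L_def by blast
  have vL: "v \<notin> L j" for j using Gv[of "Suc j"] unfolding L_def by blast
  have Mf: "D (Suc j) \<subseteq> M u \<and> M u \<subseteq> D j \<and> u \<in> M u" if u: "u \<in> L j" for u j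
  proof -
    note gj = Gg[of j] and mj = Gm[of j] and vj = Gv[of j]
    have uj: "u \<in> D j" "u \<notin> D (Suc j)" using u unfolding L_def by auto
    have "M u \<subseteq> D j" unfolding M_def using Mvw_sub[OF mj vj uj(1)] .
    moreover have "D (Suc j) \<subseteq> M u"
    proof
      fix z assume z: "z \<in> D (Suc j)"
      have "\<forall>X. is_module (D j) E X \<and> v\<in>X \<and> u\<in>X \<longrightarrow> z\<in>X"
        using good_c[OF gj] uj z by blast
      then show "z \<in> M u" unfolding M_def using Mvw_in[OF mj vj uj(1)] by blast
    qed
    moreover have "u \<in> M u" unfolding M_def by (rule Mvw_mem)
    ultimately show ?thesis by blast
  qed
  have same: "(u' \<in> M u \<and> u \<in> M u') \<or> (u' \<notin> M u \<and> u \<notin> M u')" if u: "u \<in> L j" and u': "u' \<in> L j" for u u' j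
  proof -
    note gj = Gg[of j] and mj = Gm[of j] and vj = Gv[of j]
    have uj: "u \<in> D j - D (Suc j)" "u' \<in> D j - D (Suc j)" using u u' unfolding L_def by auto
    from gj uj have
      "((\<forall>X. is_module (D j) E X \<and> v\<in>X \<and> u\<in>X \<longrightarrow> u'\<in>X) \<and> (\<forall>X. is_module (D j) E X \<and> v\<in>X \<and> u'\<in>X \<longrightarrow> u\<in>X))
        \<or> ((\<exists>Y. is_module (D j) E Y \<and> v\<in>Y \<and> u\<in>Y \<and> u'\<notin>Y) \<and> (\<exists>Y. is_module (D j) E Y \<and> v\<in>Y \<and> u'\<in>Y \<and> u\<notin>Y))"
      by (rule good_d)
    then show ?thesis
    proof
      assume h: "(\<forall>X. is_module (D j) E X \<and> v\<in>X \<and> u\<in>X \<longrightarrow> u'\<in>X) \<and> (\<forall>X. is_module (D j) E X \<and> v\<in>X \<and> u'\<in>X \<longrightarrow> u\<in>X)"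
      have "u' \<in> M u" unfolding M_def using Mvw_in[OF mj vj] h uj by blast
      moreover have "u \<in> M u'" unfolding M_def using Mvw_in[OF mj vj] h uj by blast
      ultimately show ?thesis by blast
    next
      assume h: "(\<exists>Y. is_module (D j) E Y \<and> v\<in>Y \<and> u\<in>Y \<and> u'\<notin>Y) \<and> (\<exists>Y. is_module (D j) E Y \<and> v\<in>Y \<and> u'\<in>Y \<and> u\<notin>Y)"
      have "u' \<notin> M u" unfolding M_def using Mvw_out[OF mj] h by blast
      moreover have "u \<notin> M u'" unfolding M_def using Mvw_out[OF mj] h by blast
      ultimately show ?thesis by blast
    qed
  qed
  have plt: "precv V E v u u'" if "u \<in> L a" "u' \<in> L b" "a < b" for u u' a b
  proof -
    have "D b \<subseteq> D (Suc a)" using mono that(3) by simp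
    then have "M u' \<subseteq> D (Suc a)" using Mf[OF that(2)] by blast
    moreover have "D (Suc a) \<subseteq> M u" "u \<in> M u" using Mf[OF that(1)] by auto
    moreover have "u \<notin> D (Suc a)" using that(1) unfolding L_def by auto
    ultimately have "M u' \<subset> M u" by blast
    then show ?thesis unfolding precv_def M_def by simp
  qed
  have pvv: "precv V E v u v" if "u \<in> L a" for u a
  proof -
    have Mv: "M v = {v}" unfolding M_def using Mvw_vv[OF v] .
    have vs: "v \<in> D (Suc a)" by (rule Gv)
    have h: "D (Suc a) \<subseteq> M u" "u \<in> M u" using Mf[OF that] by auto
    have uv: "u \<noteq> v" using that vL by blast
    have "M v \<subseteq> M u" unfolding Mv using vs h(1) by blast
    moreover have "M v \<noteq> M u" unfolding Mv using h(2) uv by auto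
    ultimately have "M v \<subset> M u" by (rule psubsetI)
    then show ?thesis unfolding precv_def M_def by simp
  qed
  have asym: "\<not> precv V E v b a" if "precv V E v a b" for a b
    using that unfolding precv_def by (rule less_not_sym)
  have simL: "simv V E v u u'" if "u \<in> L j" "u' \<in> L j" for u u' j
  proof -
    have mu: "u \<in> M u" "u' \<in> M u'" using Mf[OF that(1)] Mf[OF that(2)] by simp_all
    from same[OF that] show ?thesis
    proof
      assume h: "u' \<in> M u \<and> u \<in> M u'"
      have "M u' \<subseteq> M u" using h unfolding M_def by (intro Mvw_mono) simp
      moreover have "M u \<subseteq> M u'" using h unfolding M_def by (intro Mvw_mono) simp
      ultimately have "M u' \<subseteq> M u" "M u \<subseteq> M u'" by simp_all
      then show ?thesis unfolding simv_def precv_def M_def by blast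
    next
      assume "u' \<notin> M u \<and> u \<notin> M u'"
      then show ?thesis using mu unfolding simv_def precv_def M_def by blast
    qed
  qed
  have classL: "classv V E v u = L j" if u: "u \<in> L j" for u j
  proof
    show "classv V E v u \<subseteq> L j"
    proof
      fix y assume "y \<in> classv V E v u"
      then have y: "y \<in> V" "simv V E v y u" unfolding classv_def by auto
      have "y \<noteq> v" using y(2) pvv[OF u] unfolding simv_def by blast
      then obtain k where k: "y \<in> L k" using level y(1) by blast
      consider "k = j" | "k < j" | "j < k" by linarith
      then show "y \<in> L j"
      proof cases
        case 1 then show ?thesis using k by simp
      next
        case 2 then have "precv V E v y u" using plt k u by blast
        then show ?thesis using y(2) unfolding simv_def by blast
      next
        case 3 then have "precv V E v u y" using plt k u by blast
        then show ?thesis using y(2) unfolding simv_def by blast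
      qed
    qed
    show "L j \<subseteq> classv V E v u"
      using simL u LV unfolding classv_def by blast
  qed
  have wv: "w \<noteq> v" using w vL by blast
  have Lne: "L j \<noteq> {}" if j: "j < i" for j
  proof -
    have "D i \<subseteq> D j" using mono j by simp
    then have "w \<in> D j" "v \<in> D j" using w Gv[of j] unfolding L_def by auto
    then have "card (D j) \<noteq> 1" using card1 wv by blast
    then have "D (Suc j) \<noteq> D j" using good_ne[OF Gg[of j]] by simp
    then show ?thesis using sub[of j] unfolding L_def by blast
  qed
  have setEq: "{C' \<in> classesv V E v. class_precv V E v C' (classv V E v w)} = L ` {..<i}"
  proof
    show "{C' \<in> classesv V E v. class_precv V E v C' (classv V E v w)} \<subseteq> L ` {..<i}"
    proof
      fix C' assume "C' \<in> {C' \<in> classesv V E v. class_precv V E v C' (classv V E v w)}"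
      then obtain y z w' where y: "y \<in> V" "C' = classv V E v y" and z: "z \<in> C'"
        and w': "w' \<in> classv V E v w" and p: "precv V E v z w'"
        unfolding classesv_def class_precv_def by blast
      have w'L: "w' \<in> L i" using w' classL[OF w] by simp
      have zV: "z \<in> V" and szy: "simv V E v z y" using z y unfolding classv_def by auto
      have "z \<noteq> v" using p pvv[OF w'L] asym by blast
      then obtain j where zj: "z \<in> L j" using level zV by blast
      have ji: "j < i"
      proof -
        consider "j = i" | "i < j" | "j < i" by linarith
        then show ?thesis
        proof cases
          case 1
          then have "simv V E v z w'" using simL[of z i w'] zj w'L by simp
          then show ?thesis using p unfolding simv_def by simp
        next
          case 2 then show ?thesis using plt[OF w'L zj] p asym by blast
        qed
      qed
      have "y \<noteq> v" using szy pvv[OF zj] unfolding simv_def by blast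
      then obtain k where yk: "y \<in> L k" using level y(1) by blast
      have "C' = L k" using y(2) classL[OF yk] by simp
      then have "z \<in> L k" using z by simp
      then have "k = j" using zj uniq by blast
      then show "C' \<in> L ` {..<i}" using \<open>C' = L k\<close> ji by blast
    qed
    show "L ` {..<i} \<subseteq> {C' \<in> classesv V E v. class_precv V E v C' (classv V E v w)}"
    proof
      fix C' assume "C' \<in> L ` {..<i}"
      then obtain j where j: "j < i" "C' = L j" by blast
      obtain z where z: "z \<in> L j" using Lne[OF j(1)] by blast
      have "C' = classv V E v z" using classL[OF z] j by simp
      moreover have "z \<in> V" using z LV by blast
      ultimately have "C' \<in> classesv V E v" unfolding classesv_def by blast
      moreover have "class_precv V E v C' (classv V E v w)"
      proof -
        have "z \<in> C'" using z j(2) by simp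
        moreover have "w \<in> classv V E v w" using classL[OF w] w by simp
        ultimately show ?thesis unfolding class_precv_def using plt[OF z w j(1)] by blast
      qed
      ultimately show "C' \<in> {C' \<in> classesv V E v. class_precv V E v C' (classv V E v w)}" by blast
    qed
  qed
  have inj: "inj_on L {..<i}"
  proof (rule inj_onI)
    fix a b assume a: "a \<in> {..<i}" and b: "b \<in> {..<i}" and eq: "L a = L b"
    obtain z where "z \<in> L a" using Lne a by blast
    then have "z \<in> L b" using eq by simp
    then show "a = b" using uniq \<open>z \<in> L a\<close> by blast
  qed
  show "pv V E v (classv V E v w) = i"
    unfolding pv_def setEq using card_image[OF inj] by simp
qed

end
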